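(* Let $G$ be a word hyperbolic group and $0\to\mathbb Z\xrightarrow{\iota}E\xrightarrow{\pi}G\to1$ a central extension, $X$ a finite set mapping onto a symmetric generating set of $E$ (evaluation $w\mapsto\overline w\in E$). Let $C>0$ be an integer such that for every $g\in G$ the maximum $\max\{\overline w\,\iota(-C\,\mathrm{len}(w)): w\in X^*,\ \pi(\overline w)=g\}$ exists in the ordered fibre $\pi^{-1}(g)$, and such that for some $\lambda>0$ every word achieving this maximum is a $(\lambda,0)$-quasigeodesic in the Cayley graph of $G$ with respect to $\pi(\overline X)$; let $\rho(g)$ denote this maximum. Then for every constant $k$ there is a constant $K(k)$ such that whenever $g,h\in G$ and $g$ lies within distance $k$ of a geodesic path in the Cayley graph of $G$ from $1$ to $gh$, we have $d_E(\rho(gh),\rho(g)\rho(h))\le K(k)$.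
   Context: Order on a fibre: $h_1\le h_2$ iff $h_2h_1^{-1}=\iota(n)$ with $n\ge0$. $d_E$ is the word metric on $E$ with respect to the generating set $\overline X$. *)

theory Defs
  imports "HOL-Algebra.Algebra"
begin

definition word_prod :: "('a, 'b) monoid_scheme \<Rightarrow> 'a list \<Rightarrow> 'a" where
  "word_prod G ws = foldr (\<lambda>a b. a \<otimes>\<^bsub>G\<^esub> b) ws \<one>\<^bsub>G\<^esub>"

definition word_length :: "('a, 'b) monoid_scheme \<Rightarrow> 'a set \<Rightarrow> 'a \<Rightarrow> nat" where
  "word_length G S g = (LEAST n. \<exists>ws. set ws \<subseteq> S \<and> length ws = n \<and> word_prod G ws = g)"

definition word_dist :: "('a, 'b) monoid_scheme \<Rightarrow> 'a set \<Rightarrow> 'a \<Rightarrow> 'a \<Rightarrow> nat" where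
  "word_dist G S x y = word_length G S (inv\<^bsub>G\<^esub> x \<otimes>\<^bsub>G\<^esub> y)"

definition gromov_product :: "('a, 'b) monoid_scheme \<Rightarrow> 'a set \<Rightarrow> 'a \<Rightarrow> 'a \<Rightarrow> 'a \<Rightarrow> real" where
  "gromov_product G S w x y =
     (real (word_dist G S w x) + real (word_dist G S w y) - real (word_dist G S x y)) / 2"

definition finite_sym_gen_set :: "('a, 'b) monoid_scheme \<Rightarrow> 'a set \<Rightarrow> bool" where
  "finite_sym_gen_set G S \<longleftrightarrow> finite S \<and> S \<subseteq> carrier G \<and> (\<forall>s\<in>S. inv\<^bsub>G\<^esub> s \<in> S)
     \<and> generate G S = carrier G"

definition word_hyperbolic :: "('a, 'b) monoid_scheme \<Rightarrow> bool" where
  "word_hyperbolic G \<longleftrightarrow> group G \<and> (\<exists>S. finite_sym_gen_set G S \<and> (\<exists>\<delta>::real.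
     \<forall>w\<in>carrier G. \<forall>x\<in>carrier G. \<forall>y\<in>carrier G. \<forall>z\<in>carrier G.
       gromov_product G S w x z \<ge> min (gromov_product G S w x y) (gromov_product G S w y z) - \<delta>))"

definition central_extension ::
  "('g, 'a) monoid_scheme \<Rightarrow> ('e, 'b) monoid_scheme \<Rightarrow> (int \<Rightarrow> 'e) \<Rightarrow> ('e \<Rightarrow> 'g) \<Rightarrow> bool" where
  "central_extension G E \<iota> \<pi> \<longleftrightarrow> group G \<and> group E
     \<and> range \<iota> \<subseteq> carrier E \<and> (\<forall>a b. \<iota> (a + b) = \<iota> a \<otimes>\<^bsub>E\<^esub> \<iota> b) \<and> inj \<iota>
     \<and> (\<forall>n. \<forall>x\<in>carrier E. \<iota> n \<otimes>\<^bsub>E\<^esub> x = x \<otimes>\<^bsub>E\<^esub> \<iota> n)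
     \<and> \<pi> \<in> hom E G \<and> \<pi> ` carrier E = carrier G
     \<and> {x \<in> carrier E. \<pi> x = \<one>\<^bsub>G\<^esub>} = range \<iota>"

definition fibre_le :: "('e, 'b) monoid_scheme \<Rightarrow> (int \<Rightarrow> 'e) \<Rightarrow> 'e \<Rightarrow> 'e \<Rightarrow> bool" where
  "fibre_le E \<iota> h1 h2 \<longleftrightarrow> (\<exists>n\<ge>0. h2 \<otimes>\<^bsub>E\<^esub> inv\<^bsub>E\<^esub> h1 = \<iota> n)"

definition is_fibre_max :: "('e, 'b) monoid_scheme \<Rightarrow> (int \<Rightarrow> 'e) \<Rightarrow> 'e set \<Rightarrow> 'e \<Rightarrow> bool" where
  "is_fibre_max E \<iota> M m \<longleftrightarrow> m \<in> M \<and> (\<forall>x\<in>M. fibre_le E \<iota> x m)"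

definition penalized :: "('e, 'b) monoid_scheme \<Rightarrow> (int \<Rightarrow> 'e) \<Rightarrow> int \<Rightarrow> ('x \<Rightarrow> 'e) \<Rightarrow> 'x list \<Rightarrow> 'e" where
  "penalized E \<iota> C ev w = word_prod E (map ev w) \<otimes>\<^bsub>E\<^esub> \<iota> (- C * int (length w))"

definition candidates ::
  "('e, 'b) monoid_scheme \<Rightarrow> (int \<Rightarrow> 'e) \<Rightarrow> ('e \<Rightarrow> 'g) \<Rightarrow> int \<Rightarrow> 'x set \<Rightarrow> ('x \<Rightarrow> 'e) \<Rightarrow> 'g \<Rightarrow> 'e set" where
  "candidates E \<iota> \<pi> C A ev g =
     penalized E \<iota> C ev ` {w. set w \<subseteq> A \<and> \<pi> (word_prod E (map ev w)) = g}"

definition quasigeodesic :: "('g, 'a) monoid_scheme \<Rightarrow> 'g set \<Rightarrow> real \<Rightarrow> (nat \<Rightarrow> 'g) \<Rightarrow> nat \<Rightarrow> bool" where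
  "quasigeodesic G S lam p n \<longleftrightarrow> (\<forall>i\<le>n. \<forall>j\<le>n.
     \<bar>real i - real j\<bar> / lam \<le> real (word_dist G S (p i) (p j))
     \<and> real (word_dist G S (p i) (p j)) \<le> lam * \<bar>real i - real j\<bar>)"

definition word_path :: "('e, 'b) monoid_scheme \<Rightarrow> ('e \<Rightarrow> 'g) \<Rightarrow> ('x \<Rightarrow> 'e) \<Rightarrow> 'x list \<Rightarrow> nat \<Rightarrow> 'g" where
  "word_path E \<pi> ev w i = \<pi> (word_prod E (map ev (take i w)))"

definition geodesic_path :: "('g, 'a) monoid_scheme \<Rightarrow> 'g set \<Rightarrow> (nat \<Rightarrow> 'g) \<Rightarrow> nat \<Rightarrow> 'g \<Rightarrow> 'g \<Rightarrow> bool" where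
  "geodesic_path G S p n x y \<longleftrightarrow> p 0 = x \<and> p n = y \<and> n = word_dist G S x y
     \<and> (\<forall>i\<le>n. p i \<in> carrier G) \<and> (\<forall>i<n. word_dist G S (p i) (p (Suc i)) = 1)"

end

theory Submission
  imports Defs Complex_Main
begin

lemma word_prod_Nil[simp]: "word_prod H [] = \<one>\<^bsub>H\<^esub>"
  by (simp add: word_prod_def)

lemma word_prod_Cons[simp]: "word_prod H (x # xs) = x \<otimes>\<^bsub>H\<^esub> word_prod H xs"
  by (simp add: word_prod_def)

lemma (in monoid) word_prod_closed: "set xs \<subseteq> carrier G \<Longrightarrow> word_prod G xs \<in> carrier G"
  by (induction xs) auto

lemma (in monoid) word_prod_append:
  "set xs \<subseteq> carrier G \<Longrightarrow> set ys \<subseteq> carrier G \<Longrightarrow>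
   word_prod G (xs @ ys) = word_prod G xs \<otimes> word_prod G ys"
  by (induction xs) (auto simp: m_assoc word_prod_closed)

lemma (in group) word_prod_inv:
  "set xs \<subseteq> carrier G \<Longrightarrow> word_prod G (rev (map (m_inv G) xs)) = inv (word_prod G xs)"
proof (induction xs)
  case Nil then show ?case by simp
next
  case (Cons x xs)
  have "word_prod G (rev (map (m_inv G) (x # xs))) = word_prod G (rev (map (m_inv G) xs)) \<otimes> word_prod G [inv x]"
    using Cons.prems by (simp add: word_prod_append[symmetric] del: word_prod_Cons) 
       (subst word_prod_append, auto)
  also have "\<dots> = inv (word_prod G xs) \<otimes> inv x" using Cons by simp
  also have "\<dots> = inv (x \<otimes> word_prod G xs)" using Cons.prems
    by (simp add: inv_mult_group word_prod_closed)
  finally show ?case by simp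
qed

lemma (in group_hom) word_prod_hom:
  "set xs \<subseteq> carrier G \<Longrightarrow> h (word_prod G xs) = word_prod H (map h xs)"
  by (induction xs) (auto simp: G.word_prod_closed)

definition wordgen :: "('a, 'b) monoid_scheme \<Rightarrow> 'a set \<Rightarrow> bool" where
  "wordgen H S \<longleftrightarrow> S \<subseteq> carrier H \<and> (\<forall>s\<in>S. inv\<^bsub>H\<^esub> s \<in> S)
     \<and> (\<forall>g\<in>carrier H. \<exists>ws. set ws \<subseteq> S \<and> word_prod H ws = g)"

lemma (in group) wordgen_of_generate:
  assumes "S \<subseteq> carrier G" "\<forall>s\<in>S. inv s \<in> S" "generate G S = carrier G"
  shows "wordgen G S"
proof -
  have "\<exists>ws. set ws \<subseteq> S \<and> word_prod G ws = g" if "g \<in> generate G S" for g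
    using that
  proof (induction rule: generate.induct)
    case one then show ?case by (intro exI[of _ "[]"]) auto
  next
    case (incl h) then show ?case using assms by (intro exI[of _ "[h]"]) auto
  next
    case (inv h) then show ?case using assms by (intro exI[of _ "[inv h]"]) auto
  next
    case (eng h1 h2)
    then obtain w1 w2 where "set w1 \<subseteq> S" "word_prod G w1 = h1" "set w2 \<subseteq> S" "word_prod G w2 = h2"
      by blast
    then show ?case using assms(1)
      by (intro exI[of _ "w1 @ w2"]) (auto simp: word_prod_append)
  qed
  then show ?thesis using assms unfolding wordgen_def by auto
qed

lemma lift_list: "set ws \<subseteq> f ` A \<Longrightarrow> \<exists>w. set w \<subseteq> A \<and> map f w = ws"
proof (induction ws)
  case Nil then show ?case by auto
next
  case (Cons a ws)
  then obtain w where "set w \<subseteq> A" "map f w = ws" by auto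
  moreover obtain x where "x \<in> A" "a = f x" using Cons.prems by auto
  ultimately show ?case by (intro exI[of _ "x # w"]) auto
qed

context group begin

lemma wl_le: "set ws \<subseteq> S \<Longrightarrow> word_prod G ws = g \<Longrightarrow> word_length G S g \<le> length ws"
  unfolding word_length_def by (rule Least_le) auto

lemma wl_ex: assumes "wordgen G S" "g \<in> carrier G"
  shows "\<exists>ws. set ws \<subseteq> S \<and> length ws = word_length G S g \<and> word_prod G ws = g"
proof -
  obtain ws where "set ws \<subseteq> S" "word_prod G ws = g" using assms unfolding wordgen_def by blast
  then have "\<exists>n ws. set ws \<subseteq> S \<and> length ws = n \<and> word_prod G ws = g" by blast
  from LeastI_ex[OF this] show ?thesis unfolding word_length_def by blast
qed

lemma wl_mult: assumes "wordgen G S" "a \<in> carrier G" "b \<in> carrier G"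
  shows "word_length G S (a \<otimes> b) \<le> word_length G S a + word_length G S b"
proof -
  obtain u where u: "set u \<subseteq> S" "length u = word_length G S a" "word_prod G u = a"
    using wl_ex assms by blast
  obtain v where v: "set v \<subseteq> S" "length v = word_length G S b" "word_prod G v = b"
    using wl_ex assms by blast
  have "S \<subseteq> carrier G" using assms unfolding wordgen_def by auto
  then have "word_prod G (u @ v) = a \<otimes> b" using u v by (simp add: word_prod_append)
  then have "word_length G S (a \<otimes> b) \<le> length (u @ v)" using u v by (intro wl_le) auto
  then show ?thesis using u v by simp
qed

lemma wl_inv: assumes "wordgen G S" "a \<in> carrier G"
  shows "word_length G S (inv a) \<le> word_length G S a"
proof -
  obtain u where u: "set u \<subseteq> S" "length u = word_length G S a" "word_prod G u = a"
    using wl_ex assms by blast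
  have S: "S \<subseteq> carrier G" "\<forall>s\<in>S. inv s \<in> S" using assms unfolding wordgen_def by auto
  then have "word_prod G (rev (map (m_inv G) u)) = inv a" using u by (simp add: word_prod_inv)
  moreover have "set (rev (map (m_inv G) u)) \<subseteq> S" using u S by auto
  ultimately have "word_length G S (inv a) \<le> length (rev (map (m_inv G) u))" by (intro wl_le) auto
  then show ?thesis using u by simp
qed

lemma wl_one: "word_length G S \<one> = 0"
  using wl_le[of "[]" S \<one>] by simp

lemma wl_zero: assumes "wordgen G S" "a \<in> carrier G" "word_length G S a = 0" shows "a = \<one>"
  using wl_ex[OF assms(1,2)] assms(3) by auto

lemma wd_sym: assumes "wordgen G S" "x \<in> carrier G" "y \<in> carrier G"
  shows "word_dist G S x y = word_dist G S y x"
proof -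
  have "inv (inv x \<otimes> y) = inv y \<otimes> x" using assms by (simp add: inv_mult_group)
  moreover have "inv (inv y \<otimes> x) = inv x \<otimes> y" using assms by (simp add: inv_mult_group)
  moreover have "word_length G S (inv (inv x \<otimes> y)) \<le> word_length G S (inv x \<otimes> y)"
    using assms by (intro wl_inv) auto
  moreover have "word_length G S (inv (inv y \<otimes> x)) \<le> word_length G S (inv y \<otimes> x)"
    using assms by (intro wl_inv) auto
  ultimately show ?thesis unfolding word_dist_def by simp
qed

lemma wd_tri: assumes "wordgen G S" "x \<in> carrier G" "y \<in> carrier G" "z \<in> carrier G"
  shows "word_dist G S x z \<le> word_dist G S x y + word_dist G S y z"
proof -
  have "inv x \<otimes> z = (inv x \<otimes> y) \<otimes> (inv y \<otimes> z)" using assms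
    by (simp add: m_assoc[symmetric]) (simp add: m_assoc)
  then show ?thesis unfolding word_dist_def using wl_mult[OF assms(1)] assms by simp
qed

lemma wd_refl: "x \<in> carrier G \<Longrightarrow> word_dist G S x x = 0"
  unfolding word_dist_def by (simp add: wl_one)

lemma wd_zero: assumes "wordgen G S" "x \<in> carrier G" "y \<in> carrier G" "word_dist G S x y = 0"
  shows "x = y"
proof -
  have "inv x \<otimes> y = \<one>" using wl_zero assms unfolding word_dist_def by simp
  moreover have "x \<otimes> (inv x \<otimes> y) = y" using assms(2,3) by (simp add: m_assoc[symmetric])
  ultimately show ?thesis using assms(2) by simp
qed

lemma wd_geodesic: assumes "wordgen G S" "x \<in> carrier G" "y \<in> carrier G"
  shows "\<exists>c. c 0 = x \<and> c (word_dist G S x y) = y \<and> (\<forall>i\<le>word_dist G S x y. c i \<in> carrier G)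
     \<and> (\<forall>i j. i \<le> j \<longrightarrow> j \<le> word_dist G S x y \<longrightarrow> word_dist G S (c i) (c j) = j - i)"
proof -
  have S: "S \<subseteq> carrier G" using assms unfolding wordgen_def by auto
  obtain ws where ws: "set ws \<subseteq> S" "length ws = word_dist G S x y" "word_prod G ws = inv x \<otimes> y"
  proof -
    have "inv x \<otimes> y \<in> carrier G" using assms by simp
    from wl_ex[OF assms(1) this] obtain ws where "set ws \<subseteq> S"
      "length ws = word_length G S (inv x \<otimes> y)" "word_prod G ws = inv x \<otimes> y" by blast
    then show ?thesis using that unfolding word_dist_def by blast
  qed
  define N where "N = word_dist G S x y"
  define c where "c i = x \<otimes> word_prod G (take i ws)" for i
  have wsC: "set ws \<subseteq> carrier G" using ws S by auto
  have tC: "set (take i ws) \<subseteq> carrier G" for i using wsC set_take_subset by (rule order_trans[rotated])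
  have cC: "c i \<in> carrier G" for i unfolding c_def using assms tC word_prod_closed by auto
  have c0: "c 0 = x" using assms by (simp add: c_def)
  have cN: "c N = y" using assms ws
    by (simp add: c_def N_def m_assoc[symmetric])
  have up: "word_dist G S (c i) (c j) \<le> j - i" if "i \<le> j" for i j
  proof -
    have tk: "take j ws = take i ws @ take (j - i) (drop i ws)" using that
      using take_add[of i "j - i" ws] by simp
    have dC: "set (take (j - i) (drop i ws)) \<subseteq> carrier G" using wsC
      by (auto dest: in_set_takeD in_set_dropD)
    define a where "a = word_prod G (take i ws)"
    define b where "b = word_prod G (take (j - i) (drop i ws))"
    have aC: "a \<in> carrier G" and bC: "b \<in> carrier G" unfolding a_def b_def
      using tC dC by (auto intro: word_prod_closed)
    have xa: "x \<otimes> a \<in> carrier G" using aC assms by simp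
    have cj: "c j = (x \<otimes> a) \<otimes> b" unfolding c_def tk a_def b_def
      using tC dC assms by (simp add: word_prod_append m_assoc word_prod_closed)
    have "inv (c i) \<otimes> c j = inv (x \<otimes> a) \<otimes> ((x \<otimes> a) \<otimes> b)"
      unfolding cj unfolding c_def a_def by simp
    also have "\<dots> = b" using xa bC by (simp add: m_assoc[symmetric])
    finally have "inv (c i) \<otimes> c j = word_prod G (take (j - i) (drop i ws))" unfolding b_def .
    then have "word_dist G S (c i) (c j) \<le> length (take (j - i) (drop i ws))"
      unfolding word_dist_def using ws
      by (intro wl_le) (auto dest: in_set_takeD in_set_dropD)
    then show ?thesis by simp
  qed
  have "word_dist G S (c i) (c j) = j - i" if "i \<le> j" "j \<le> N" for i j
  proof -
    have t1: "word_dist G S (c 0) (c j) \<le> word_dist G S (c 0) (c i) + word_dist G S (c i) (c j)"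
      by (rule wd_tri[OF assms(1) cC cC cC])
    have t2: "word_dist G S (c 0) (c N) \<le> word_dist G S (c 0) (c j) + word_dist G S (c j) (c N)"
      by (rule wd_tri[OF assms(1) cC cC cC])
    have "word_dist G S (c 0) (c N) = N" using c0 cN N_def by simp
    then show ?thesis using t1 t2 up[of 0 i] up[of j N] up[of i j] that by linarith
  qed
  then have "\<forall>i j. i \<le> j \<longrightarrow> j \<le> word_dist G S x y \<longrightarrow> word_dist G S (c i) (c j) = j - i"
    unfolding N_def by blast
  moreover have "c (word_dist G S x y) = y" using cN unfolding N_def .
  ultimately show ?thesis using c0 cC by (intro exI[of _ c]) simp
qed

lemma wl_compare: assumes "wordgen G S" "wordgen G T" "\<forall>s\<in>S. word_length G T s \<le> a"
    "g \<in> carrier G"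
  shows "word_length G T g \<le> a * word_length G S g"
proof -
  have S: "S \<subseteq> carrier G" using assms unfolding wordgen_def by auto
  obtain ws where ws: "set ws \<subseteq> S" "length ws = word_length G S g" "word_prod G ws = g"
    using wl_ex[OF assms(1,4)] by blast
  have "word_length G T (word_prod G ws) \<le> a * length ws" if "set ws \<subseteq> S" for ws
    using that
  proof (induction ws)
    case Nil then show ?case by (simp add: wl_one)
  next
    case (Cons s ws)
    then have "word_length G T (word_prod G (s # ws)) \<le> word_length G T s + word_length G T (word_prod G ws)"
      using S by (simp, intro wl_mult[OF assms(2)]) (auto intro: word_prod_closed)
    then show ?case using Cons assms(3) by auto
  qed
  from this[OF ws(1)] show ?thesis using ws(2,3) by simp
qed

lemma wd_compare: assumes "wordgen G S" "wordgen G T" "\<forall>s\<in>S. word_length G T s \<le> a"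
    "x \<in> carrier G" "y \<in> carrier G"
  shows "word_dist G T x y \<le> a * word_dist G S x y"
  unfolding word_dist_def using wl_compare assms by simp

lemma wl_bounded: assumes "wordgen G T" "finite S" "S \<subseteq> carrier G"
  shows "\<exists>a. \<forall>s\<in>S. word_length G T s \<le> a"
  using assms(2) by (intro exI[of _ "Max (word_length G T ` S)"]) auto

end


definition gp :: "('a \<Rightarrow> 'a \<Rightarrow> nat) \<Rightarrow> 'a \<Rightarrow> 'a \<Rightarrow> 'a \<Rightarrow> real" where
  "gp d w x y = (real (d w x) + real (d w y) - real (d x y)) / 2"

locale hypsp =
  fixes V :: "'a set" and d :: "'a \<Rightarrow> 'a \<Rightarrow> nat" and \<delta> :: real
  assumes dsym: "x \<in> V \<Longrightarrow> y \<in> V \<Longrightarrow> d x y = d y x"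
    and dtri: "x \<in> V \<Longrightarrow> y \<in> V \<Longrightarrow> z \<in> V \<Longrightarrow> d x z \<le> d x y + d y z"
    and drefl: "x \<in> V \<Longrightarrow> d x x = 0"
    and dpos: "\<delta> \<ge> 0"
    and four: "w \<in> V \<Longrightarrow> x \<in> V \<Longrightarrow> y \<in> V \<Longrightarrow> z \<in> V \<Longrightarrow>
       gp d w x z \<ge> min (gp d w x y) (gp d w y z) - \<delta>"
begin

lemma gp_sym: "x \<in> V \<Longrightarrow> y \<in> V \<Longrightarrow> gp d w x y = gp d w y x"
  unfolding gp_def using dsym by simp

lemma gp_lower: assumes "w \<in> V" "x \<in> V" "y \<in> V" shows "gp d w x y \<ge> real (d w x) - real (d x y)"
proof -
  have "d w x \<le> d w y + d y x" using dtri assms by blast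
  then show ?thesis unfolding gp_def using dsym assms by simp
qed

lemma chain:
  assumes "\<forall>i\<le>N. a (s+i) \<in> V" "w \<in> V" "\<forall>i<N. gp d w (a (s+i)) (a (s+Suc i)) \<ge> m"
    "1 \<le> N" "N \<le> 2^k"
  shows "gp d w (a s) (a (s+N)) \<ge> m - k*\<delta>"
  using assms
proof (induction k arbitrary: s N)
  case 0
  then have "N = 1" by simp
  then show ?case using 0 by simp
next
  case (Suc k)
  show ?case
  proof (cases "N = 1")
    case True
    have "0 \<le> (1 + real k) * \<delta>" using dpos by simp
    then show ?thesis using Suc.prems True by simp
  next
    case False
    define h where "h = N div 2"
    have h1: "1 \<le> h" "h \<le> 2^k" "1 \<le> N - h" "N - h \<le> 2^k" "h < N"
      using False Suc.prems(4,5) unfolding h_def by auto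
    have A: "gp d w (a s) (a (s+h)) \<ge> m - k*\<delta>"
      using Suc.IH[of h s] Suc.prems h1 by auto
    have B: "gp d w (a (s+h)) (a (s+h+(N-h))) \<ge> m - k*\<delta>"
      using Suc.IH[of "N-h" "s+h"] Suc.prems h1 by (auto simp: add.assoc)
    have "s+h+(N-h) = s+N" using h1 by simp
    have "gp d w (a s) (a (s+N)) \<ge> min (gp d w (a s) (a (s+h))) (gp d w (a (s+h)) (a (s+N))) - \<delta>"
    proof (rule four)
      show "a s \<in> V" using Suc.prems(1)[rule_format, of 0] by simp
      show "a (s+h) \<in> V" using Suc.prems(1) h1 by simp
      show "a (s+N) \<in> V" using Suc.prems(1) by simp
    qed (use Suc.prems in auto)
    moreover have "min (gp d w (a s) (a (s+h))) (gp d w (a (s+h)) (a (s+N))) \<ge> m - k*\<delta>"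
      using A B \<open>s+h+(N-h) = s+N\<close> by simp
    moreover have "real (Suc k) * \<delta> = real k * \<delta> + \<delta>" by (simp add: algebra_simps)
    ultimately show ?thesis by linarith
  qed
qed

end


lemma log_bound:
  fixes \<alpha> \<beta> c :: real
  assumes "\<beta> > 0" "c \<ge> 0"
  shows "\<exists>B. \<forall>x::real. x \<ge> 1 \<longrightarrow> x \<le> \<alpha> + c * log 2 (\<beta> * x) \<longrightarrow> x \<le> B"
proof -
  define cc where "cc = 2 * c / ln 2"
  define aa where "aa = \<alpha> + c * log 2 \<beta>"
  have cc0: "cc \<ge> 0" using assms unfolding cc_def by simp
  show ?thesis
  proof (intro exI[of _ "max (4 * cc ^ 2) (2 * aa)"] allI impI)
    fix x :: real assume x1: "x \<ge> 1" and xb: "x \<le> \<alpha> + c * log 2 (\<beta> * x)"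
    have lm: "log 2 (\<beta> * x) = log 2 \<beta> + log 2 x" using assms x1 by (simp add: log_mult)
    have sx: "sqrt x > 0" using x1 by simp
    have "ln x = 2 * ln (sqrt x)" using x1 by (simp add: ln_sqrt)
    also have "\<dots> \<le> 2 * (sqrt x - 1)" using ln_le_minus_one[OF sx] by simp
    also have "\<dots> \<le> 2 * sqrt x" by simp
    finally have lx: "ln x \<le> 2 * sqrt x" .
    have "log 2 x = ln x / ln 2" by (simp add: log_def)
    also have "\<dots> \<le> 2 * sqrt x / ln 2" using lx by (intro divide_right_mono) auto
    finally have "log 2 x \<le> 2 * sqrt x / ln 2" .
    then have "c * log 2 x \<le> c * (2 * sqrt x / ln 2)" using assms(2) by (rule mult_left_mono)
    also have "\<dots> = cc * sqrt x" unfolding cc_def by simp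
    finally have "c * log 2 x \<le> cc * sqrt x" .
    then have xs: "x \<le> aa + cc * sqrt x"
      using xb lm unfolding aa_def by (simp add: algebra_simps)
    show "x \<le> max (4 * cc ^ 2) (2 * aa)"
    proof (cases "sqrt x \<le> 2 * cc")
      case True
      then have "sqrt x ^ 2 \<le> (2 * cc)^2" using x1 by (intro power_mono) auto
      then show ?thesis using x1 by (simp add: power_mult_distrib)
    next
      case False
      then have "cc * sqrt x \<le> (sqrt x / 2) * sqrt x" using cc0 x1
        by (intro mult_right_mono) auto
      also have "\<dots> = x / 2" using x1 by simp
      finally show ?thesis using xs by simp
    qed
  qed
qed


context hypsp begin

lemma gp_self: "w \<in> V \<Longrightarrow> x \<in> V \<Longrightarrow> gp d w x x = real (d w x)"
  unfolding gp_def using drefl by simp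

lemma morse1:
  assumes L1: "L \<ge> 1"
  and rV: "\<forall>i\<le>n. r i \<in> V"
  and rq: "\<forall>i j. i \<le> j \<longrightarrow> j \<le> n \<longrightarrow> real (j - i) \<le> L * real (d (r i) (r j))
              \<and> real (d (r i) (r j)) \<le> L * real (j - i)"
  and c0: "c 0 = r 0" and cN: "c N = r n" and cV: "\<forall>t\<le>N. c t \<in> V"
  and cg: "\<forall>i j. i \<le> j \<longrightarrow> j \<le> N \<longrightarrow> d (c i) (c j) = j - i"
  and B: "\<forall>x::real. x \<ge> 1 \<longrightarrow> x \<le> L + 3*\<delta> + \<delta> * log 2 (6*L*x) \<longrightarrow> x \<le> B"
  shows "\<forall>t\<le>N. \<exists>j\<le>n. real (d (c t) (r j)) \<le> max B 0"
proof -
  define f where "f t = Min ((\<lambda>j. d (c t) (r j)) ` {..n})" for t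
  have f_le: "f t \<le> d (c t) (r j)" if "j \<le> n" for t j
    unfolding f_def using that by (intro Min_le) auto
  have f_ex: "\<exists>j\<le>n. f t = d (c t) (r j)" for t
  proof -
    have "f t \<in> (\<lambda>j. d (c t) (r j)) ` {..n}" unfolding f_def by (intro Min_in) auto
    then show ?thesis by auto
  qed
  define D where "D = Max (f ` {..N})"
  have fD: "f t \<le> D" if "t \<le> N" for t unfolding D_def using that by (intro Max_ge) auto
  obtain t0 where t0: "t0 \<le> N" "f t0 = D"
  proof -
    have "D \<in> f ` {..N}" unfolding D_def by (intro Max_in) auto
    then show ?thesis using that by auto
  qed
  have main: "real D \<le> max B 0"
  proof (cases "D = 0")
    case True then show ?thesis by simp
  next
    case False
    then have D1: "real D \<ge> 1" by simp
    define p where "p = c t0"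
    have pV: "p \<in> V" using cV t0 p_def by simp
    have r0V: "r 0 \<in> V" and rnV: "r n \<in> V" using rV by auto
    have pfar: "D \<le> d p (r j)" if "j \<le> n" for j using f_le[OF that, of t0] t0 p_def by simp
    have dpc: "d p (c s) = (if s \<le> t0 then t0 - s else s - t0)" if "s \<le> N" for s
    proof (cases "s \<le> t0")
      case True
      then have "d (c s) (c t0) = t0 - s" using cg t0 by simp
      moreover have "d p (c s) = d (c s) (c t0)" using dsym cV t0 that p_def by simp
      ultimately show ?thesis using True by simp
    next
      case False
      then show ?thesis using cg t0 that p_def by simp
    qed
    obtain s1 j1 where s1: "s1 \<le> t0" "t0 - s1 \<le> 2*D" "j1 \<le> n" "d (c s1) (r j1) \<le> D"
        "gp d p (c s1) (r j1) \<ge> D"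
    proof (cases "2*D \<le> t0")
      case True
      define s where "s = t0 - 2*D"
      obtain j where j: "j \<le> n" "f s = d (c s) (r j)" using f_ex by blast
      have "d (c s) (r j) \<le> D" using j fD[of s] t0 s_def by simp
      moreover have "d p (c s) = 2*D" using dpc[of s] True t0 s_def by simp
      moreover have "gp d p (c s) (r j) \<ge> real (d p (c s)) - real (d (c s) (r j))"
        using gp_lower pV cV rV j t0 s_def by simp
      ultimately have "gp d p (c s) (r j) \<ge> D" by simp
      then show ?thesis using that[of s j] j s_def True \<open>d (c s) (r j) \<le> D\<close> by simp
    next
      case False
      have "gp d p (c 0) (r 0) = d p (r 0)" using gp_self pV r0V c0 by simp
      then have "gp d p (c 0) (r 0) \<ge> D" using pfar[of 0] by simp
      then show ?thesis using that[of 0 0] False c0 drefl r0V by simp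
    qed
    obtain s2 j2 where s2: "t0 \<le> s2" "s2 \<le> N" "s2 - t0 \<le> 2*D" "j2 \<le> n" "d (c s2) (r j2) \<le> D"
        "gp d p (r j2) (c s2) \<ge> D"
    proof (cases "t0 + 2*D \<le> N")
      case True
      define s where "s = t0 + 2*D"
      obtain j where j: "j \<le> n" "f s = d (c s) (r j)" using f_ex by blast
      have "d (c s) (r j) \<le> D" using j fD[of s] True s_def by simp
      moreover have "d p (c s) = 2*D" using dpc[of s] True t0 s_def by simp
      moreover have "gp d p (c s) (r j) \<ge> real (d p (c s)) - real (d (c s) (r j))"
        using gp_lower pV cV rV j True s_def by simp
      moreover have "gp d p (r j) (c s) = gp d p (c s) (r j)"
        using gp_sym cV rV j True s_def by simp
      ultimately have "gp d p (r j) (c s) \<ge> D" by simp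
      then show ?thesis using that[of s j] j s_def True \<open>d (c s) (r j) \<le> D\<close> by simp
    next
      case False
      have "gp d p (r n) (c N) = d p (r n)" using gp_self pV rnV cN by simp
      then have "gp d p (r n) (c N) \<ge> D" using pfar[of n] by simp
      then show ?thesis using that[of N n] False t0 cN drefl rnV by simp
    qed
    have cs1V: "c s1 \<in> V" and cs2V: "c s2 \<in> V" using cV s1 s2 t0 by auto
    have rj1V: "r j1 \<in> V" and rj2V: "r j2 \<in> V" using rV s1 s2 by auto
    have gp0: "gp d p (c s1) (c s2) = 0"
    proof -
      have "d p (c s1) = t0 - s1" using dpc[of s1] s1 t0 by simp
      moreover have "d p (c s2) = s2 - t0" using dpc[of s2] s2 t0 by auto
      moreover have "d (c s1) (c s2) = s2 - s1" using cg s1 s2 by simp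
      ultimately show ?thesis unfolding gp_def using s1 s2 by simp
    qed
    have d12: "d (r j1) (r j2) \<le> 6*D"
    proof -
      have "d (r j1) (r j2) \<le> d (r j1) (c s1) + d (c s1) (r j2)" using dtri rj1V rj2V cs1V by blast
      moreover have "d (c s1) (r j2) \<le> d (c s1) (c s2) + d (c s2) (r j2)" using dtri rj2V cs2V cs1V by blast
      moreover have "d (r j1) (c s1) = d (c s1) (r j1)" using dsym rj1V cs1V by blast
      moreover have "d (c s1) (c s2) = s2 - s1" using cg s1 s2 by simp
      ultimately show ?thesis using s1 s2 by linarith
    qed
    define lo where "lo = min j1 j2"
    define M where "M = max j1 j2 - lo"
    have jdiff: "real M \<le> 6 * L * real D"
    proof -
      have "real M \<le> L * real (d (r lo) (r (lo + M)))"
        using rq[rule_format, of lo "lo+M"] s1 s2 unfolding lo_def M_def by auto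
      moreover have "d (r lo) (r (lo + M)) = d (r j1) (r j2)"
        unfolding lo_def M_def using dsym rj1V rj2V by (cases "j1 \<le> j2") auto
      ultimately have "real M \<le> L * real (d (r j1) (r j2))" by simp
      also have "\<dots> \<le> L * (6 * real D)" using d12 L1 by (intro mult_left_mono) auto
      finally show ?thesis by simp
    qed
    define y where "y = log 2 (6 * L * real D)"
    define k where "k = nat \<lceil>y\<rceil>"
    have LD1: "1 \<le> 6 * L * real D"
    proof -
      have "1 * 1 \<le> (6 * L) * real D" using L1 D1 by (intro mult_mono) auto
      then show ?thesis by simp
    qed
    have y0: "y \<ge> 0" unfolding y_def using LD1 by simp
    have ky: "real k < y + 1" "y \<le> real k" unfolding k_def using y0 by linarith+
    have M2k: "M \<le> 2^k"
    proof -
      have "6 * L * real D = 2 powr y" unfolding y_def using LD1 by simp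
      also have "\<dots> \<le> 2 powr (real k)" using ky by simp
      also have "\<dots> = 2 ^ k" by (simp add: powr_realpow)
      finally have "6 * L * real D \<le> 2 ^ k" .
      then have "real M \<le> 2 ^ k" using jdiff by linarith
      then have "real M \<le> real (2 ^ k)" by simp
      then show ?thesis by (simp only: of_nat_le_iff)
    qed
    have mid: "gp d p (r j1) (r j2) \<ge> real D - L - real k * \<delta>"
    proof (cases "M = 0")
      case True
      then have "j1 = j2" unfolding M_def lo_def by auto
      then have "gp d p (r j1) (r j2) = d p (r j1)" using gp_self pV rj1V by simp
      moreover have "real k * \<delta> \<ge> 0" using dpos by simp
      ultimately show ?thesis using pfar[of j1] s1 L1 by simp
    next
      case False
      have "gp d p (r lo) (r (lo + M)) \<ge> (real D - L) - real k * \<delta>"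
      proof (rule chain)
        show "\<forall>i\<le>M. r (lo + i) \<in> V" using rV s1 s2 unfolding M_def lo_def by auto
        show "p \<in> V" by (rule pV)
        show "1 \<le> M" using False by simp
        show "M \<le> 2^k" by (rule M2k)
        show "\<forall>i<M. real D - L \<le> gp d p (r (lo + i)) (r (lo + Suc i))"
        proof (intro allI impI)
          fix i assume "i < M"
          then have iV: "lo + Suc i \<le> n" using s1 s2 unfolding M_def lo_def by auto
          have "gp d p (r (lo + i)) (r (lo + Suc i)) \<ge> real (d p (r (lo+i))) - real (d (r (lo+i)) (r (lo + Suc i)))"
            using gp_lower pV rV iV by simp
          moreover have "real (d (r (lo+i)) (r (lo + Suc i))) \<le> L"
            using rq[rule_format, of "lo+i" "lo + Suc i"] iV by simp
          moreover have "D \<le> d p (r (lo+i))" using pfar iV by simp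
          ultimately show "real D - L \<le> gp d p (r (lo + i)) (r (lo + Suc i))" by simp
        qed
      qed
      moreover have "gp d p (r lo) (r (lo + M)) = gp d p (r j1) (r j2)"
        unfolding lo_def M_def using gp_sym rj1V rj2V by (cases "j1 \<le> j2") auto
      ultimately show ?thesis by simp
    qed
    have f1: "gp d p (c s1) (c s2) \<ge> min (gp d p (c s1) (r j1)) (gp d p (r j1) (c s2)) - \<delta>"
      by (rule four[OF pV cs1V rj1V cs2V])
    have f2: "gp d p (r j1) (c s2) \<ge> min (gp d p (r j1) (r j2)) (gp d p (r j2) (c s2)) - \<delta>"
      by (rule four[OF pV rj1V rj2V cs2V])
    have kd: "real k * \<delta> \<ge> 0" using dpos by simp
    have "real D \<le> L + real k * \<delta> + 2 * \<delta>"
      using f1 f2 gp0 mid s1(5) s2(6) kd L1 by linarith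
    also have "\<dots> \<le> L + 3 * \<delta> + \<delta> * y"
    proof -
      have "real k * \<delta> \<le> (y + 1) * \<delta>" using ky dpos by (intro mult_right_mono) auto
      then show ?thesis by (simp add: algebra_simps)
    qed
    finally have "real D \<le> L + 3 * \<delta> + \<delta> * log 2 (6 * L * real D)" unfolding y_def .
    then have "real D \<le> B" using B D1 by blast
    then show ?thesis by simp
  qed
  show ?thesis
  proof (intro allI impI)
    fix t assume "t \<le> N"
    obtain j where "j \<le> n" "f t = d (c t) (r j)" using f_ex by blast
    then show "\<exists>j\<le>n. real (d (c t) (r j)) \<le> max B 0" using fD[OF \<open>t \<le> N\<close>] main
      by (intro exI[of _ j]) auto
  qed
qed

end


context hypsp begin

lemma morse2:
  assumes L1: "L \<ge> 1"
  and rV: "\<forall>i\<le>n. r i \<in> V"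
  and rq: "\<forall>i j. i \<le> j \<longrightarrow> j \<le> n \<longrightarrow> real (j - i) \<le> L * real (d (r i) (r j))
              \<and> real (d (r i) (r j)) \<le> L * real (j - i)"
  and c0: "c 0 = r 0" and cN: "c N = r n" and cV: "\<forall>t\<le>N. c t \<in> V"
  and cg: "\<forall>i j. i \<le> j \<longrightarrow> j \<le> N \<longrightarrow> d (c i) (c j) = j - i"
  and near: "\<forall>t\<le>N. \<exists>j\<le>n. real (d (c t) (r j)) \<le> B0"
  shows "\<forall>i\<le>n. \<exists>t\<le>N. real (d (r i) (c t)) \<le> L*L*(2*B0+1) + B0"
proof (intro allI impI)
  fix i assume i: "i \<le> n"
  have B00: "B0 \<ge> 0" using near by force
  define R where "R t \<longleftrightarrow> (\<exists>j. i \<le> j \<and> j \<le> n \<and> real (d (c t) (r j)) \<le> B0)" for t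
  have RN: "R N" unfolding R_def using i cN drefl rV B00 by (intro exI[of _ n]) auto
  define ts where "ts = (LEAST t. R t)"
  have Rts: "R ts" unfolding ts_def using RN by (rule LeastI)
  have tsN: "ts \<le> N" unfolding ts_def using RN by (rule Least_le)
  obtain t1 j1 j2 where tj: "t1 \<le> N" "j1 \<le> i" "i \<le> j2" "j2 \<le> n" "real (d (c t1) (r j1)) \<le> B0"
    "real (d (c t1) (r j2)) \<le> B0 + 1"
  proof (cases "ts = 0")
    case True
    obtain j where j: "i \<le> j" "j \<le> n" "real (d (c 0) (r j)) \<le> B0" using Rts True R_def by auto
    have "d (c 0) (r 0) = 0" using c0 drefl rV by simp
    then show ?thesis using that[of 0 0 j] j B00 by simp
  next
    case False
    define t1 where "t1 = ts - 1"
    have "\<not> R t1" unfolding t1_def ts_def using False ts_def by (intro not_less_Least) auto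
    have "t1 \<le> N" using tsN t1_def by simp
    then obtain j where j: "j \<le> n" "real (d (c t1) (r j)) \<le> B0" using near by blast
    have "j < i" using \<open>\<not> R t1\<close> j R_def by force
    obtain j' where j': "i \<le> j'" "j' \<le> n" "real (d (c ts) (r j')) \<le> B0" using Rts R_def by auto
    have "d (c t1) (r j') \<le> d (c t1) (c ts) + d (c ts) (r j')"
      using dtri cV rV tsN t1_def j' by simp
    moreover have "d (c t1) (c ts) = 1" using cg tsN False t1_def by simp
    ultimately have "real (d (c t1) (r j')) \<le> B0 + 1" using j' by simp
    then show ?thesis using that[of t1 j j'] j j' \<open>j < i\<close> tsN t1_def by simp
  qed
  have V1: "r j1 \<in> V" "r j2 \<in> V" "c t1 \<in> V" "r i \<in> V" using rV cV tj i by auto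
  have "d (r j1) (r j2) \<le> d (r j1) (c t1) + d (c t1) (r j2)" using dtri V1 by blast
  moreover have "d (r j1) (c t1) = d (c t1) (r j1)" using dsym V1 by blast
  ultimately have d12: "real (d (r j1) (r j2)) \<le> 2*B0 + 1" using tj by linarith
  have "real (j2 - j1) \<le> L * real (d (r j1) (r j2))" using rq tj by auto
  also have "\<dots> \<le> L * (2*B0+1)" using d12 L1 by (intro mult_left_mono) auto
  finally have jj: "real (j2 - j1) \<le> L * (2*B0+1)" .
  have "real (d (r j1) (r i)) \<le> L * real (i - j1)" using rq tj i by auto
  also have "\<dots> \<le> L * real (j2 - j1)" using tj L1 by (intro mult_left_mono) auto
  also have "\<dots> \<le> L * (L * (2*B0+1))" using jj L1 by (intro mult_left_mono) auto
  finally have d1i: "real (d (r j1) (r i)) \<le> L*L*(2*B0+1)" by simp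
  have "d (r i) (c t1) \<le> d (r i) (r j1) + d (r j1) (c t1)" using dtri V1 by blast
  moreover have "d (r i) (r j1) = d (r j1) (r i)" using dsym V1 by blast
  ultimately have "real (d (r i) (c t1)) \<le> L*L*(2*B0+1) + B0"
    using d1i tj \<open>d (r j1) (c t1) = d (c t1) (r j1)\<close> by linarith
  then show "\<exists>t\<le>N. real (d (r i) (c t)) \<le> L*L*(2*B0+1) + B0" using tj by blast
qed

end


lemma ext_facts:
  assumes ext: "central_extension G E \<iota> \<pi>"
  shows "group E" "group G" "\<iota> n \<in> carrier E" "\<iota> (a + b) = \<iota> a \<otimes>\<^bsub>E\<^esub> \<iota> b" "inj \<iota>"
    "x \<in> carrier E \<Longrightarrow> \<iota> n \<otimes>\<^bsub>E\<^esub> x = x \<otimes>\<^bsub>E\<^esub> \<iota> n" "group_hom E G \<pi>"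
    "\<pi> ` carrier E = carrier G" "\<pi> (\<iota> n) = \<one>\<^bsub>G\<^esub>" "\<iota> 0 = \<one>\<^bsub>E\<^esub>"
    "\<iota> (- n) = inv\<^bsub>E\<^esub> (\<iota> n)"
proof -
  show gE: "group E" and gG: "group G" and iC: "\<iota> n \<in> carrier E" and ia: "\<iota> (a + b) = \<iota> a \<otimes>\<^bsub>E\<^esub> \<iota> b"
    and "inj \<iota>" and "x \<in> carrier E \<Longrightarrow> \<iota> n \<otimes>\<^bsub>E\<^esub> x = x \<otimes>\<^bsub>E\<^esub> \<iota> n"
    and "\<pi> ` carrier E = carrier G"
    using ext unfolding central_extension_def by auto
  show "group_hom E G \<pi>" using ext gE gG unfolding central_extension_def group_hom_def group_hom_axioms_def
    by auto
  have "\<iota> n \<in> {x \<in> carrier E. \<pi> x = \<one>\<^bsub>G\<^esub>}" using ext unfolding central_extension_def by auto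
  then show "\<pi> (\<iota> n) = \<one>\<^bsub>G\<^esub>" by simp
  interpret E: group E by (rule gE)
  have i0C: "\<iota> 0 \<in> carrier E" using ext unfolding central_extension_def by auto
  have "\<iota> 0 \<otimes>\<^bsub>E\<^esub> \<iota> 0 = \<iota> 0 \<otimes>\<^bsub>E\<^esub> \<one>\<^bsub>E\<^esub>"
    using ext i0C unfolding central_extension_def by (metis add_0 E.r_one)
  then show i0: "\<iota> 0 = \<one>\<^bsub>E\<^esub>" using i0C by (meson E.l_cancel E.one_closed)
  have inC: "\<iota> (-n) \<in> carrier E" "\<iota> n \<in> carrier E" using ext unfolding central_extension_def by auto
  have "\<iota> (-n) \<otimes>\<^bsub>E\<^esub> \<iota> n = \<one>\<^bsub>E\<^esub>" using ext i0 unfolding central_extension_def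
    by (metis add.left_inverse)
  then show "\<iota> (- n) = inv\<^bsub>E\<^esub> (\<iota> n)" using inC by (simp add: E.inv_equality)
qed

definition pen_word where "pen_word E ev w = word_prod E (map ev w)"

lemma core:
  fixes G :: "('g, 'a) monoid_scheme" and E :: "('e, 'b) monoid_scheme"
  assumes ext: "central_extension G E \<iota> \<pi>"
    and evA: "ev ` A \<subseteq> carrier E" "\<forall>x\<in>A. inv\<^bsub>E\<^esub> (ev x) \<in> ev ` A"
    and rho: "\<forall>g\<in>carrier G. is_fibre_max E \<iota> (candidates E \<iota> \<pi> C A ev g) (\<rho> g)"
    and gh: "g \<in> carrier G" "h \<in> carrier G"
    and w: "set w \<subseteq> A" "\<pi> (word_prod E (map ev w)) = g \<otimes>\<^bsub>G\<^esub> h"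
       "penalized E \<iota> C ev w = \<rho> (g \<otimes>\<^bsub>G\<^esub> h)"
    and u: "set u \<subseteq> A"
       "\<pi> (word_prod E (map ev u)) = inv\<^bsub>G\<^esub> (\<pi> (word_prod E (map ev (take j w)))) \<otimes>\<^bsub>G\<^esub> g"
  shows "\<exists>N. inv\<^bsub>E\<^esub> (\<rho> (g \<otimes>\<^bsub>G\<^esub> h)) \<otimes>\<^bsub>E\<^esub> (\<rho> g \<otimes>\<^bsub>E\<^esub> \<rho> h) = \<iota> N
          \<and> - 2 * C * int (length u) \<le> N \<and> N \<le> 0"
proof -
  note ef = ext_facts[OF ext]
  interpret E: group E by (rule ef(1))
  interpret G: group G by (rule ef(2))
  interpret pi: group_hom E G \<pi> by (rule ef(7))
  define W where "W x = word_prod E (map ev x)" for x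
  define P where "P x = penalized E \<iota> C ev x" for x
  have iC: "\<iota> n \<in> carrier E" for n by (rule ef(3))
  have ia: "\<iota> (a + b) = \<iota> a \<otimes>\<^bsub>E\<^esub> \<iota> b" for a b by (rule ef(4))
  have cen: "x \<in> carrier E \<Longrightarrow> \<iota> n \<otimes>\<^bsub>E\<^esub> x = x \<otimes>\<^bsub>E\<^esub> \<iota> n" for x n by (rule ef(6))
  have WC: "set x \<subseteq> A \<Longrightarrow> W x \<in> carrier E" for x
    unfolding W_def using evA by (intro E.word_prod_closed) auto
  have Wapp: "set x \<subseteq> A \<Longrightarrow> set y \<subseteq> A \<Longrightarrow> W (x @ y) = W x \<otimes>\<^bsub>E\<^esub> W y" for x y
    unfolding W_def using evA by (simp add: E.word_prod_append, intro E.word_prod_append) auto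
  have PW: "P x = W x \<otimes>\<^bsub>E\<^esub> \<iota> (- C * int (length x))" for x
    unfolding P_def W_def penalized_def by simp
  have Papp: "P (x @ y) = P x \<otimes>\<^bsub>E\<^esub> P y" if "set x \<subseteq> A" "set y \<subseteq> A" for x y
  proof -
    have "P (x @ y) = (W x \<otimes>\<^bsub>E\<^esub> W y) \<otimes>\<^bsub>E\<^esub> \<iota> (- C * int (length x) + - C * int (length y))"
      using PW Wapp that by (simp add: algebra_simps)
    also have "\<dots> = (W x \<otimes>\<^bsub>E\<^esub> W y) \<otimes>\<^bsub>E\<^esub> (\<iota> (- C * int (length x)) \<otimes>\<^bsub>E\<^esub> \<iota> (- C * int (length y)))"
      by (simp only: ia)
    also have "\<dots> = W x \<otimes>\<^bsub>E\<^esub> (W y \<otimes>\<^bsub>E\<^esub> \<iota> (- C * int (length x))) \<otimes>\<^bsub>E\<^esub> \<iota> (- C * int (length y))"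
      using WC that iC by (simp add: E.m_assoc)
    also have "\<dots> = W x \<otimes>\<^bsub>E\<^esub> (\<iota> (- C * int (length x)) \<otimes>\<^bsub>E\<^esub> W y) \<otimes>\<^bsub>E\<^esub> \<iota> (- C * int (length y))"
      using cen[OF WC[OF that(2)], of "- C * int (length x)"] by simp
    also have "\<dots> = P x \<otimes>\<^bsub>E\<^esub> P y" using PW WC that iC by (simp add: E.m_assoc)
    finally show ?thesis .
  qed
  have PC: "set x \<subseteq> A \<Longrightarrow> P x \<in> carrier E" for x using PW WC iC by simp
  have piW: "set x \<subseteq> A \<Longrightarrow> \<pi> (W x) \<in> carrier G" for x using WC by simp
  have cand: "P x \<in> candidates E \<iota> \<pi> C A ev (\<pi> (W x))" if "set x \<subseteq> A" for x
    unfolding candidates_def P_def W_def using that by auto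
  have le_rho: "\<exists>m\<ge>0. \<rho> (\<pi> (W x)) \<otimes>\<^bsub>E\<^esub> inv\<^bsub>E\<^esub> (P x) = \<iota> m" if "set x \<subseteq> A" for x
    using rho piW[OF that] cand[OF that] unfolding is_fibre_max_def fibre_le_def by blast
  have rho_word: "\<exists>x. set x \<subseteq> A \<and> \<pi> (W x) = g' \<and> P x = \<rho> g'" if "g' \<in> carrier G" for g'
  proof -
    have "\<rho> g' \<in> candidates E \<iota> \<pi> C A ev g'" using rho that unfolding is_fibre_max_def by blast
    then obtain x where "set x \<subseteq> A" "\<pi> (word_prod E (map ev x)) = g'" "\<rho> g' = penalized E \<iota> C ev x"
      unfolding candidates_def by auto
    then show ?thesis unfolding P_def W_def by auto
  qed
  define il where "il x = (SOME x'. x' \<in> A \<and> ev x' = inv\<^bsub>E\<^esub> (ev x))" for x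
  have il: "il x \<in> A \<and> ev (il x) = inv\<^bsub>E\<^esub> (ev x)" if "x \<in> A" for x
    unfolding il_def
  proof (rule someI_ex)
    show "\<exists>x'. x' \<in> A \<and> ev x' = inv\<^bsub>E\<^esub> (ev x)" using evA(2) that by force
  qed
  define u' where "u' = rev (map il u)"
  have u'A: "set u' \<subseteq> A" using u il unfolding u'_def by auto
  have mu': "map ev u' = rev (map (m_inv E) (map ev u))" unfolding u'_def using u(1) il
    by (induction u) auto
  have Wu': "W u' = inv\<^bsub>E\<^esub> (W u)" unfolding W_def mu' using u evA
    by (intro E.word_prod_inv) auto
  have lu': "length u' = length u" unfolding u'_def by simp
  define w1 where "w1 = take j w"
  define w2 where "w2 = drop j w"
  have w12: "w = w1 @ w2" "set w1 \<subseteq> A" "set w2 \<subseteq> A" unfolding w1_def w2_def using w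
    by (auto dest: in_set_takeD in_set_dropD)
  have qj: "\<pi> (W w1) \<in> carrier G" using piW w12 by simp
  have Wu_C: "W u \<in> carrier E" using WC u by simp
  have pig: "\<pi> (W (w1 @ u)) = g"
  proof -
    have "\<pi> (W (w1 @ u)) = \<pi> (W w1) \<otimes>\<^bsub>G\<^esub> \<pi> (W u)" using Wapp w12 u WC by simp
    also have "\<dots> = \<pi> (W w1) \<otimes>\<^bsub>G\<^esub> (inv\<^bsub>G\<^esub> (\<pi> (W w1)) \<otimes>\<^bsub>G\<^esub> g)" using u unfolding W_def w1_def by simp
    also have "\<dots> = g" using qj gh by (simp add: G.m_assoc[symmetric])
    finally show ?thesis .
  qed
  have pih: "\<pi> (W (u' @ w2)) = h"
  proof -
    have piw: "\<pi> (W w1) \<otimes>\<^bsub>G\<^esub> \<pi> (W w2) = g \<otimes>\<^bsub>G\<^esub> h"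
    proof -
      have "\<pi> (W w1) \<otimes>\<^bsub>G\<^esub> \<pi> (W w2) = \<pi> (W w1 \<otimes>\<^bsub>E\<^esub> W w2)"
        using WC w12 by simp
      also have "W w1 \<otimes>\<^bsub>E\<^esub> W w2 = W w" using Wapp w12 by simp
      finally show ?thesis using w(2) unfolding W_def by simp
    qed
    have "\<pi> (W (u' @ w2)) = inv\<^bsub>G\<^esub> (\<pi> (W u)) \<otimes>\<^bsub>G\<^esub> \<pi> (W w2)"
      using Wapp u'A w12 WC Wu' Wu_C by simp
    also have "\<dots> = inv\<^bsub>G\<^esub> (inv\<^bsub>G\<^esub> (\<pi> (W w1)) \<otimes>\<^bsub>G\<^esub> g) \<otimes>\<^bsub>G\<^esub> \<pi> (W w2)"
      using u unfolding W_def w1_def by simp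
    also have "\<dots> = inv\<^bsub>G\<^esub> g \<otimes>\<^bsub>G\<^esub> (\<pi> (W w1) \<otimes>\<^bsub>G\<^esub> \<pi> (W w2))"
      using qj gh piW w12 by (simp add: G.inv_mult_group G.m_assoc)
    also have "\<dots> = h" using piw gh by (simp add: G.m_assoc[symmetric])
    finally show ?thesis .
  qed
  obtain m1 where m1: "m1 \<ge> 0" "\<rho> g \<otimes>\<^bsub>E\<^esub> inv\<^bsub>E\<^esub> (P (w1 @ u)) = \<iota> m1"
    using le_rho[of "w1 @ u"] pig w12 u by auto
  obtain m2 where m2: "m2 \<ge> 0" "\<rho> h \<otimes>\<^bsub>E\<^esub> inv\<^bsub>E\<^esub> (P (u' @ w2)) = \<iota> m2"
    using le_rho[of "u' @ w2"] pih w12 u'A by auto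
  have P1C: "P (w1 @ u) \<in> carrier E" and P2C: "P (u' @ w2) \<in> carrier E"
    using PC w12 u u'A by auto
  obtain xg where xg: "set xg \<subseteq> A" "\<pi> (W xg) = g" "P xg = \<rho> g" using rho_word gh by blast
  obtain xh where xh: "set xh \<subseteq> A" "\<pi> (W xh) = h" "P xh = \<rho> h" using rho_word gh by blast
  have rgC: "\<rho> g \<in> carrier E" and rhC: "\<rho> h \<in> carrier E" using PC[OF xg(1)] PC[OF xh(1)] xg(3) xh(3) by auto
  have rgh: "\<rho> (g \<otimes>\<^bsub>G\<^esub> h) = P w" using w(3) P_def by simp
  have rghC: "\<rho> (g \<otimes>\<^bsub>G\<^esub> h) \<in> carrier E" using rgh PC w by simp
  have solve: "a = (a \<otimes>\<^bsub>E\<^esub> inv\<^bsub>E\<^esub> b) \<otimes>\<^bsub>E\<^esub> b" if "a \<in> carrier E" "b \<in> carrier E" for a b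
    using that by (simp add: E.m_assoc)
  have rg: "\<rho> g = \<iota> m1 \<otimes>\<^bsub>E\<^esub> P (w1 @ u)" using solve[OF rgC P1C] m1 by simp
  have rh: "\<rho> h = \<iota> m2 \<otimes>\<^bsub>E\<^esub> P (u' @ w2)" using solve[OF rhC P2C] m2 by simp
  have Wuu: "W (u @ u') = \<one>\<^bsub>E\<^esub>" using Wapp u u'A Wu' Wu_C by simp
  have PP: "P (w1 @ u) \<otimes>\<^bsub>E\<^esub> P (u' @ w2) = \<rho> (g \<otimes>\<^bsub>G\<^esub> h) \<otimes>\<^bsub>E\<^esub> \<iota> (- 2 * C * int (length u))"
  proof -
    have "P (w1 @ u) \<otimes>\<^bsub>E\<^esub> P (u' @ w2) = P (w1 @ (u @ u') @ w2)"
      using Papp w12(2,3) u(1) u'A PC by (simp add: E.m_assoc)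
    also have "\<dots> = W (w1 @ (u @ u') @ w2) \<otimes>\<^bsub>E\<^esub> \<iota> (- C * int (length w) + - 2 * C * int (length u))"
      using PW w12 lu' by (simp add: algebra_simps)
    also have "W (w1 @ (u @ u') @ w2) = W w"
    proof -
      have uu: "set (u @ u') \<subseteq> A" using u(1) u'A by simp
      have "W (w1 @ (u @ u') @ w2) = W w1 \<otimes>\<^bsub>E\<^esub> (W (u @ u') \<otimes>\<^bsub>E\<^esub> W w2)"
        using Wapp[OF w12(2), of "(u @ u') @ w2"] Wapp[OF uu w12(3)] uu w12(3) by simp
      also have "\<dots> = W w1 \<otimes>\<^bsub>E\<^esub> W w2" using Wuu WC[OF w12(3)] by simp
      also have "\<dots> = W w" using Wapp[OF w12(2,3)] w12(1) by simp
      finally show ?thesis .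
    qed
    also have "W w \<otimes>\<^bsub>E\<^esub> \<iota> (- C * int (length w) + - 2 * C * int (length u)) = P w \<otimes>\<^bsub>E\<^esub> \<iota> (- 2 * C * int (length u))"
    proof -
      have "W w \<otimes>\<^bsub>E\<^esub> \<iota> (- C * int (length w) + - 2 * C * int (length u))
          = W w \<otimes>\<^bsub>E\<^esub> (\<iota> (- C * int (length w)) \<otimes>\<^bsub>E\<^esub> \<iota> (- 2 * C * int (length u)))"
        by (simp only: ia)
      also have "\<dots> = (W w \<otimes>\<^bsub>E\<^esub> \<iota> (- C * int (length w))) \<otimes>\<^bsub>E\<^esub> \<iota> (- 2 * C * int (length u))"
        using WC[OF w(1)] iC by (simp add: E.m_assoc)
      also have "W w \<otimes>\<^bsub>E\<^esub> \<iota> (- C * int (length w)) = P w" using PW by simp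
      finally show ?thesis .
    qed
    finally show ?thesis using rgh by simp
  qed
  define N where "N = m1 + m2 + - 2 * C * int (length u)"
  have prod: "\<rho> g \<otimes>\<^bsub>E\<^esub> \<rho> h = \<rho> (g \<otimes>\<^bsub>G\<^esub> h) \<otimes>\<^bsub>E\<^esub> \<iota> N"
  proof -
    define P1 where "P1 = P (w1 @ u)"
    define P2 where "P2 = P (u' @ w2)"
    define R where "R = \<rho> (g \<otimes>\<^bsub>G\<^esub> h)"
    define b where "b = - 2 * C * int (length u)"
    have P1C': "P1 \<in> carrier E" and P2C': "P2 \<in> carrier E" and RC: "R \<in> carrier E"
      using P1C P2C rghC unfolding P1_def P2_def R_def by auto
    have c1: "P1 \<otimes>\<^bsub>E\<^esub> \<iota> m2 = \<iota> m2 \<otimes>\<^bsub>E\<^esub> P1" using cen[OF P1C'] by simp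
    have c2: "\<iota> (m1 + m2) \<otimes>\<^bsub>E\<^esub> R = R \<otimes>\<^bsub>E\<^esub> \<iota> (m1 + m2)" using cen[OF RC] by simp
    have PP': "P1 \<otimes>\<^bsub>E\<^esub> P2 = R \<otimes>\<^bsub>E\<^esub> \<iota> b" using PP unfolding P1_def P2_def R_def b_def .
    have "\<rho> g \<otimes>\<^bsub>E\<^esub> \<rho> h = (\<iota> m1 \<otimes>\<^bsub>E\<^esub> P1) \<otimes>\<^bsub>E\<^esub> (\<iota> m2 \<otimes>\<^bsub>E\<^esub> P2)"
      using rg rh unfolding P1_def P2_def by simp
    also have "\<dots> = \<iota> m1 \<otimes>\<^bsub>E\<^esub> ((P1 \<otimes>\<^bsub>E\<^esub> \<iota> m2) \<otimes>\<^bsub>E\<^esub> P2)"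
      using iC P1C' P2C' by (simp add: E.m_assoc)
    also have "\<dots> = \<iota> m1 \<otimes>\<^bsub>E\<^esub> ((\<iota> m2 \<otimes>\<^bsub>E\<^esub> P1) \<otimes>\<^bsub>E\<^esub> P2)"
      by (simp only: c1)
    also have "\<dots> = (\<iota> m1 \<otimes>\<^bsub>E\<^esub> \<iota> m2) \<otimes>\<^bsub>E\<^esub> (P1 \<otimes>\<^bsub>E\<^esub> P2)"
      using iC P1C' P2C' by (simp add: E.m_assoc)
    also have "\<dots> = \<iota> (m1 + m2) \<otimes>\<^bsub>E\<^esub> (R \<otimes>\<^bsub>E\<^esub> \<iota> b)"
      by (simp only: PP' ia)
    also have "\<dots> = (\<iota> (m1 + m2) \<otimes>\<^bsub>E\<^esub> R) \<otimes>\<^bsub>E\<^esub> \<iota> b"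
      using iC RC by (simp add: E.m_assoc)
    also have "\<dots> = (R \<otimes>\<^bsub>E\<^esub> \<iota> (m1 + m2)) \<otimes>\<^bsub>E\<^esub> \<iota> b"
      by (simp only: c2)
    also have "\<dots> = R \<otimes>\<^bsub>E\<^esub> (\<iota> (m1 + m2) \<otimes>\<^bsub>E\<^esub> \<iota> b)"
      using iC RC by (simp add: E.m_assoc)
    also have "\<dots> = R \<otimes>\<^bsub>E\<^esub> \<iota> N"
      unfolding N_def b_def by (simp only: ia)
    finally show ?thesis unfolding R_def .
  qed
  have eqN: "inv\<^bsub>E\<^esub> (\<rho> (g \<otimes>\<^bsub>G\<^esub> h)) \<otimes>\<^bsub>E\<^esub> (\<rho> g \<otimes>\<^bsub>E\<^esub> \<rho> h) = \<iota> N"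
    using prod rghC iC by (simp add: E.m_assoc[symmetric])
  have PP2: "P (xg @ xh) = \<rho> g \<otimes>\<^bsub>E\<^esub> \<rho> h" using Papp xg xh by simp
  have "\<pi> (W (xg @ xh)) = g \<otimes>\<^bsub>G\<^esub> h" using Wapp xg xh WC by simp
  then obtain m3 where m3: "m3 \<ge> 0" "\<rho> (g \<otimes>\<^bsub>G\<^esub> h) \<otimes>\<^bsub>E\<^esub> inv\<^bsub>E\<^esub> (\<rho> g \<otimes>\<^bsub>E\<^esub> \<rho> h) = \<iota> m3"
    using le_rho[of "xg @ xh"] PP2 xg xh by auto
  have "\<rho> (g \<otimes>\<^bsub>G\<^esub> h) \<otimes>\<^bsub>E\<^esub> inv\<^bsub>E\<^esub> (\<rho> g \<otimes>\<^bsub>E\<^esub> \<rho> h) = \<iota> (- N)"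
  proof -
    define R where "R = \<rho> (g \<otimes>\<^bsub>G\<^esub> h)"
    have RC: "R \<in> carrier E" using rghC R_def by simp
    have cR: "R \<otimes>\<^bsub>E\<^esub> \<iota> (- N) = \<iota> (- N) \<otimes>\<^bsub>E\<^esub> R" using cen[OF RC] by simp
    have "R \<otimes>\<^bsub>E\<^esub> inv\<^bsub>E\<^esub> (\<rho> g \<otimes>\<^bsub>E\<^esub> \<rho> h) = R \<otimes>\<^bsub>E\<^esub> inv\<^bsub>E\<^esub> (R \<otimes>\<^bsub>E\<^esub> \<iota> N)"
      using prod R_def by simp
    also have "\<dots> = R \<otimes>\<^bsub>E\<^esub> (\<iota> (- N) \<otimes>\<^bsub>E\<^esub> inv\<^bsub>E\<^esub> R)"
      using RC iC by (simp add: E.inv_mult_group ef(11))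
    also have "\<dots> = (R \<otimes>\<^bsub>E\<^esub> \<iota> (- N)) \<otimes>\<^bsub>E\<^esub> inv\<^bsub>E\<^esub> R"
      using RC iC by (simp add: E.m_assoc)
    also have "\<dots> = (\<iota> (- N) \<otimes>\<^bsub>E\<^esub> R) \<otimes>\<^bsub>E\<^esub> inv\<^bsub>E\<^esub> R" by (simp only: cR)
    also have "\<dots> = \<iota> (- N)" using RC iC by (simp add: E.m_assoc)
    finally show ?thesis unfolding R_def .
  qed
  then have "\<iota> m3 = \<iota> (- N)" using m3 by simp
  then have "m3 = - N" using ef(5) by (simp add: inj_eq)
  then show ?thesis using eqN m1 m2 m3 unfolding N_def by auto
qed


lemma (in group) gpath_dist:
  assumes wg: "wordgen G T" and gp: "geodesic_path G T p n x y"
  shows "\<forall>i j. i \<le> j \<longrightarrow> j \<le> n \<longrightarrow> word_dist G T (p i) (p j) = j - i"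
proof -
  have pC: "p i \<in> carrier G" if "i \<le> n" for i using gp that unfolding geodesic_path_def by auto
  have st: "word_dist G T (p i) (p (Suc i)) = 1" if "i < n" for i
    using gp that unfolding geodesic_path_def by auto
  have up: "word_dist G T (p i) (p (i + m)) \<le> m" if "i + m \<le> n" for i m
    using that
  proof (induction m)
    case 0 then show ?case using wd_refl pC by simp
  next
    case (Suc m)
    have "word_dist G T (p i) (p (i + Suc m)) \<le> word_dist G T (p i) (p (i + m)) + word_dist G T (p (i + m)) (p (Suc (i + m)))"
      using wd_tri[OF wg] pC Suc.prems by simp
    also have "word_dist G T (p (i + m)) (p (Suc (i + m))) = 1" using st Suc.prems by simp
    finally show ?case using Suc by simp
  qed
  show ?thesis
  proof (intro allI impI)
    fix i j assume ij: "i \<le> j" "j \<le> n"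
    have u1: "word_dist G T (p i) (p j) \<le> j - i" using up[of i "j - i"] ij by simp
    have u2: "word_dist G T (p 0) (p i) \<le> i" using up[of 0 i] ij by simp
    have u3: "word_dist G T (p j) (p n) \<le> n - j" using up[of j "n - j"] ij by simp
    have t1: "word_dist G T (p 0) (p j) \<le> word_dist G T (p 0) (p i) + word_dist G T (p i) (p j)"
      using wd_tri[OF wg] pC ij by simp
    have t2: "word_dist G T (p 0) (p n) \<le> word_dist G T (p 0) (p j) + word_dist G T (p j) (p n)"
      using wd_tri[OF wg] pC ij by simp
    have "p 0 = x" "p n = y" "n = word_dist G T x y" using gp unfolding geodesic_path_def by auto
    then have "word_dist G T (p 0) (p n) = n" by simp
    then show "word_dist G T (p i) (p j) = j - i" using u1 u2 u3 t1 t2 ij by linarith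
  qed
qed

lemma wl_iota:
  assumes ext: "central_extension G E \<iota> \<pi>" and wg: "wordgen E TA"
  shows "word_length E TA (\<iota> (- int m)) \<le> m * word_length E TA (\<iota> (-1))"
proof (induction m)
  case 0
  interpret E: group E by (rule ext_facts(1)[OF ext])
  show ?case using ext_facts(10)[OF ext] E.wl_one by simp
next
  case (Suc m)
  interpret E: group E by (rule ext_facts(1)[OF ext])
  have "\<iota> (- int (Suc m)) = \<iota> (- int m + -1)" by (simp add: algebra_simps)
  also have "\<dots> = \<iota> (- int m) \<otimes>\<^bsub>E\<^esub> \<iota> (-1)" by (rule ext_facts(4)[OF ext])
  finally have "\<iota> (- int (Suc m)) = \<iota> (- int m) \<otimes>\<^bsub>E\<^esub> \<iota> (-1)" .
  then have "word_length E TA (\<iota> (- int (Suc m))) \<le> word_length E TA (\<iota> (- int m)) + word_length E TA (\<iota> (-1))"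
    using E.wl_mult[OF wg] ext_facts(3)[OF ext] by simp
  then show ?case using Suc by simp
qed


theorem lemma3p2:
  fixes G :: "('g, 'a) monoid_scheme" and E :: "('e, 'b) monoid_scheme"
    and \<iota> :: "int \<Rightarrow> 'e" and \<pi> :: "'e \<Rightarrow> 'g"
    and A :: "'x set" and ev :: "'x \<Rightarrow> 'e"
    and C :: int and \<rho> :: "'g \<Rightarrow> 'e"
  assumes hyp: "word_hyperbolic G"
    and ext: "central_extension G E \<iota> \<pi>"
    and gen: "finite A" "ev ` A \<subseteq> carrier E"
      "\<forall>x\<in>A. inv\<^bsub>E\<^esub> (ev x) \<in> ev ` A" "generate E (ev ` A) = carrier E"
    and C: "C > 0"
    and rho: "\<forall>g\<in>carrier G. is_fibre_max E \<iota> (candidates E \<iota> \<pi> C A ev g) (\<rho> g)"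
    and qg: "\<exists>lam>0. \<forall>g\<in>carrier G. \<forall>w. set w \<subseteq> A \<and> \<pi> (word_prod E (map ev w)) = g
               \<and> penalized E \<iota> C ev w = \<rho> g
             \<longrightarrow> quasigeodesic G (\<pi> ` ev ` A) lam (word_path E \<pi> ev w) (length w)"
  shows "\<forall>k::real. \<exists>K::real. \<forall>g\<in>carrier G. \<forall>h\<in>carrier G.
           (\<exists>p n i. geodesic_path G (\<pi> ` ev ` A) p n \<one>\<^bsub>G\<^esub> (g \<otimes>\<^bsub>G\<^esub> h) \<and> i \<le> n
                 \<and> real (word_dist G (\<pi> ` ev ` A) g (p i)) \<le> k)
           \<longrightarrow> real (word_dist E (ev ` A) (\<rho> (g \<otimes>\<^bsub>G\<^esub> h)) (\<rho> g \<otimes>\<^bsub>E\<^esub> \<rho> h)) \<le> K"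
proof -
  note ef = ext_facts[OF ext]
  interpret E: group E by (rule ef(1))
  interpret G: group G by (rule ef(2))
  interpret pi: group_hom E G \<pi> by (rule ef(7))
  define T where "T = \<pi> ` ev ` A"
  have wgE: "wordgen E (ev ` A)" using gen by (intro E.wordgen_of_generate) auto
  have TC: "T \<subseteq> carrier G" unfolding T_def using gen(2) by auto
  have wgT: "wordgen G T" unfolding wordgen_def
  proof (intro conjI ballI)
    show "T \<subseteq> carrier G" by (rule TC)
  next
    fix t assume "t \<in> T"
    then obtain x where x: "x \<in> A" "t = \<pi> (ev x)" unfolding T_def by auto
    have evx: "ev x \<in> carrier E" using x gen(2) by blast
    have it: "inv\<^bsub>G\<^esub> t = \<pi> (inv\<^bsub>E\<^esub> (ev x))" using x(2) pi.hom_inv[OF evx] by simp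
    have "inv\<^bsub>E\<^esub> (ev x) \<in> ev ` A" using gen(3) x(1) by blast
    then have "\<pi> (inv\<^bsub>E\<^esub> (ev x)) \<in> T" unfolding T_def by (rule imageI)
    then show "inv\<^bsub>G\<^esub> t \<in> T" using it by simp
  next
    fix g assume "g \<in> carrier G"
    then have "g \<in> \<pi> ` carrier E" using ef(8) by simp
    then obtain e where e: "e \<in> carrier E" "g = \<pi> e" by blast
    then obtain ws where ws: "set ws \<subseteq> ev ` A" "word_prod E ws = e" using wgE unfolding wordgen_def by blast
    have "\<pi> (word_prod E ws) = word_prod G (map \<pi> ws)" using ws gen(2) by (intro pi.word_prod_hom) auto
    then show "\<exists>ws. set ws \<subseteq> T \<and> word_prod G ws = g"
      using ws e unfolding T_def by (intro exI[of _ "map \<pi> ws"]) auto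
  qed
  have finT: "finite T" unfolding T_def using gen(1) by simp
  obtain S \<delta>0 where S: "finite_sym_gen_set G S" and four0: "\<forall>w\<in>carrier G. \<forall>x\<in>carrier G. \<forall>y\<in>carrier G. \<forall>z\<in>carrier G.
       gromov_product G S w x z \<ge> min (gromov_product G S w x y) (gromov_product G S w y z) - \<delta>0"
    using hyp unfolding word_hyperbolic_def by blast
  have SC: "S \<subseteq> carrier G" and finS: "finite S" using S unfolding finite_sym_gen_set_def by auto
  have wgS: "wordgen G S" using S unfolding finite_sym_gen_set_def by (intro G.wordgen_of_generate) auto
  define \<delta> where "\<delta> = max \<delta>0 0"
  interpret H: hypsp "carrier G" "word_dist G S" \<delta>
  proof
    show "\<And>x y. x \<in> carrier G \<Longrightarrow> y \<in> carrier G \<Longrightarrow> word_dist G S x y = word_dist G S y x"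
      using G.wd_sym[OF wgS] by blast
    show "\<And>x y z. x \<in> carrier G \<Longrightarrow> y \<in> carrier G \<Longrightarrow> z \<in> carrier G \<Longrightarrow>
      word_dist G S x z \<le> word_dist G S x y + word_dist G S y z"
      using G.wd_tri[OF wgS] by blast
    show "\<And>x. x \<in> carrier G \<Longrightarrow> word_dist G S x x = 0" using G.wd_refl by blast
    show "0 \<le> \<delta>" unfolding \<delta>_def by simp
    fix w x y z assume "w \<in> carrier G" "x \<in> carrier G" "y \<in> carrier G" "z \<in> carrier G"
    then have "gromov_product G S w x z \<ge> min (gromov_product G S w x y) (gromov_product G S w y z) - \<delta>0"
      using four0 by blast
    moreover have "\<And>w x y. gromov_product G S w x y = gp (word_dist G S) w x y"
      unfolding gromov_product_def gp_def by simp
    ultimately have "min (gp (word_dist G S) w x y) (gp (word_dist G S) w y z) - \<delta>0 \<le> gp (word_dist G S) w x z"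
      by simp
    moreover have "\<delta>0 \<le> \<delta>" unfolding \<delta>_def by simp
    ultimately show "min (gp (word_dist G S) w x y) (gp (word_dist G S) w y z) - \<delta> \<le> gp (word_dist G S) w x z"
      by linarith
  qed
  obtain a where a: "\<forall>s\<in>S. word_length G T s \<le> a" using G.wl_bounded[OF wgT finS SC] by blast
  obtain b where b: "\<forall>t\<in>T. word_length G S t \<le> b" using G.wl_bounded[OF wgS finT TC] by blast
  have dTS: "real (word_dist G T x y) \<le> real a * real (word_dist G S x y)"
    if "x \<in> carrier G" "y \<in> carrier G" for x y
  proof -
    have "word_dist G T x y \<le> a * word_dist G S x y" by (rule G.wd_compare[OF wgS wgT a that])
    then have "real (word_dist G T x y) \<le> real (a * word_dist G S x y)" by (simp only: of_nat_le_iff)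
    then show ?thesis by simp
  qed
  have dST: "real (word_dist G S x y) \<le> real b * real (word_dist G T x y)"
    if "x \<in> carrier G" "y \<in> carrier G" for x y
  proof -
    have "word_dist G S x y \<le> b * word_dist G T x y" by (rule G.wd_compare[OF wgT wgS b that])
    then have "real (word_dist G S x y) \<le> real (b * word_dist G T x y)" by (simp only: of_nat_le_iff)
    then show ?thesis by simp
  qed
  obtain lam where lam: "lam > 0" and qg': "\<forall>g\<in>carrier G. \<forall>w. set w \<subseteq> A \<and> \<pi> (word_prod E (map ev w)) = g
               \<and> penalized E \<iota> C ev w = \<rho> g
             \<longrightarrow> quasigeodesic G T lam (word_path E \<pi> ev w) (length w)"
    using qg unfolding T_def by blast
  define La where "La = real a + real b + 1"
  define Lq where "Lq = La * (lam + 1)"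
  have La1: "La \<ge> 1" "real a \<le> La" "real b \<le> La" unfolding La_def by auto
  have Lq1: "Lq \<ge> 1" "lam * real a \<le> Lq" "lam * real b \<le> Lq"
  proof -
    have "1 * 1 \<le> La * (lam + 1)" using La1 lam by (intro mult_mono) auto
    then show "Lq \<ge> 1" unfolding Lq_def by simp
    have "lam * real a \<le> (lam + 1) * La" using La1 lam by (intro mult_mono) auto
    then show "lam * real a \<le> Lq" unfolding Lq_def by (simp add: mult.commute)
    have "lam * real b \<le> (lam + 1) * La" using La1 lam by (intro mult_mono) auto
    then show "lam * real b \<le> Lq" unfolding Lq_def by (simp add: mult.commute)
  qed
  obtain Bp where Bp: "\<forall>x::real. x \<ge> 1 \<longrightarrow> x \<le> (La + 3*\<delta>) + \<delta> * log 2 ((6*La) * x) \<longrightarrow> x \<le> Bp"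
    using log_bound[of "6*La" \<delta> "La + 3*\<delta>"] La1 H.dpos by auto
  obtain Bq where Bq: "\<forall>x::real. x \<ge> 1 \<longrightarrow> x \<le> (Lq + 3*\<delta>) + \<delta> * log 2 ((6*Lq) * x) \<longrightarrow> x \<le> Bq"
    using log_bound[of "6*Lq" \<delta> "Lq + 3*\<delta>"] Lq1 H.dpos by auto
  define D1 where "D1 = La*La*(2*max Bp 0+1) + max Bp 0"
  define B0q where "B0q = max Bq 0"
  define wl1 where "wl1 = word_length E (ev ` A) (\<iota> (-1))"
  show ?thesis
  proof (intro allI)
    fix k :: real
    define R where "R = real b * k + D1 + B0q"
    define K where "K = 2 * real_of_int C * (real a * R) * real wl1"
    show "\<exists>K::real. \<forall>g\<in>carrier G. \<forall>h\<in>carrier G.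
           (\<exists>p n i. geodesic_path G (\<pi> ` ev ` A) p n \<one>\<^bsub>G\<^esub> (g \<otimes>\<^bsub>G\<^esub> h) \<and> i \<le> n
                 \<and> real (word_dist G (\<pi> ` ev ` A) g (p i)) \<le> k)
           \<longrightarrow> real (word_dist E (ev ` A) (\<rho> (g \<otimes>\<^bsub>G\<^esub> h)) (\<rho> g \<otimes>\<^bsub>E\<^esub> \<rho> h)) \<le> K"
    proof (intro exI[of _ K] ballI impI)
      fix g h assume g: "g \<in> carrier G" and h: "h \<in> carrier G"
      assume "\<exists>p n i. geodesic_path G (\<pi> ` ev ` A) p n \<one>\<^bsub>G\<^esub> (g \<otimes>\<^bsub>G\<^esub> h) \<and> i \<le> n
                 \<and> real (word_dist G (\<pi> ` ev ` A) g (p i)) \<le> k"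
      then obtain p n i where pg: "geodesic_path G T p n \<one>\<^bsub>G\<^esub> (g \<otimes>\<^bsub>G\<^esub> h)" and i: "i \<le> n"
        and pik: "real (word_dist G T g (p i)) \<le> k" unfolding T_def by blast
      have ghC: "g \<otimes>\<^bsub>G\<^esub> h \<in> carrier G" using g h by simp
      show "real (word_dist E (ev ` A) (\<rho> (g \<otimes>\<^bsub>G\<^esub> h)) (\<rho> g \<otimes>\<^bsub>E\<^esub> \<rho> h)) \<le> K"
      proof -
        obtain w where w: "set w \<subseteq> A" "\<pi> (word_prod E (map ev w)) = g \<otimes>\<^bsub>G\<^esub> h"
            "penalized E \<iota> C ev w = \<rho> (g \<otimes>\<^bsub>G\<^esub> h)"
        proof -
          have "\<rho> (g \<otimes>\<^bsub>G\<^esub> h) \<in> candidates E \<iota> \<pi> C A ev (g \<otimes>\<^bsub>G\<^esub> h)"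
            using rho ghC unfolding is_fibre_max_def by blast
          then show ?thesis using that unfolding candidates_def by auto
        qed
        define q where "q = word_path E \<pi> ev w"
        define nq where "nq = length w"
        have mapC: "set (map ev x) \<subseteq> carrier E" if "set x \<subseteq> A" for x using that gen(2) by auto
        have qC: "q j \<in> carrier G" for j
        proof -
          have "set (take j w) \<subseteq> A" using w(1) by (meson order_trans set_take_subset)
          then have "word_prod E (map ev (take j w)) \<in> carrier E" using mapC E.word_prod_closed by blast
          then show ?thesis unfolding q_def word_path_def by simp
        qed
        have q0: "q 0 = \<one>\<^bsub>G\<^esub>" unfolding q_def word_path_def by simp
        have qn: "q nq = g \<otimes>\<^bsub>G\<^esub> h" unfolding q_def word_path_def nq_def using w(2) by simp
        have qq: "quasigeodesic G T lam q nq" using qg' ghC w unfolding q_def nq_def by blast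
        obtain c where c0: "c 0 = \<one>\<^bsub>G\<^esub>" and cN: "c (word_dist G S \<one>\<^bsub>G\<^esub> (g \<otimes>\<^bsub>G\<^esub> h)) = g \<otimes>\<^bsub>G\<^esub> h"
          and cC: "\<forall>t\<le>word_dist G S \<one>\<^bsub>G\<^esub> (g \<otimes>\<^bsub>G\<^esub> h). c t \<in> carrier G"
          and cg: "\<forall>i j. i \<le> j \<longrightarrow> j \<le> word_dist G S \<one>\<^bsub>G\<^esub> (g \<otimes>\<^bsub>G\<^esub> h) \<longrightarrow>
                     word_dist G S (c i) (c j) = j - i"
          using G.wd_geodesic[OF wgS G.one_closed ghC] by blast
        define Nc where "Nc = word_dist G S \<one>\<^bsub>G\<^esub> (g \<otimes>\<^bsub>G\<^esub> h)"
        have pC: "\<forall>i\<le>n. p i \<in> carrier G" and p0: "p 0 = \<one>\<^bsub>G\<^esub>" and pn: "p n = g \<otimes>\<^bsub>G\<^esub> h"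
          using pg unfolding geodesic_path_def by auto
        have pd: "\<forall>i j. i \<le> j \<longrightarrow> j \<le> n \<longrightarrow> word_dist G T (p i) (p j) = j - i"
          by (rule G.gpath_dist[OF wgT pg])
        have pq: "\<forall>i j. i \<le> j \<longrightarrow> j \<le> n \<longrightarrow> real (j - i) \<le> La * real (word_dist G S (p i) (p j))
              \<and> real (word_dist G S (p i) (p j)) \<le> La * real (j - i)"
        proof (intro allI impI)
          fix i j assume ij: "i \<le> j" "j \<le> n"
          have C2: "p i \<in> carrier G" "p j \<in> carrier G" using pC ij by auto
          have e: "real (word_dist G T (p i) (p j)) = real (j - i)" using pd ij by simp
          have "real (j - i) \<le> real a * real (word_dist G S (p i) (p j))" using dTS[OF C2] e by simp
          also have "\<dots> \<le> La * real (word_dist G S (p i) (p j))" using La1 by (intro mult_right_mono) auto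
          finally have 1: "real (j - i) \<le> La * real (word_dist G S (p i) (p j))" .
          have "real (word_dist G S (p i) (p j)) \<le> real b * real (j - i)" using dST[OF C2] e by simp
          also have "\<dots> \<le> La * real (j - i)" using La1 by (intro mult_right_mono) auto
          finally show "real (j - i) \<le> La * real (word_dist G S (p i) (p j))
              \<and> real (word_dist G S (p i) (p j)) \<le> La * real (j - i)" using 1 by simp
        qed
        have qqS: "\<forall>i j. i \<le> j \<longrightarrow> j \<le> nq \<longrightarrow> real (j - i) \<le> Lq * real (word_dist G S (q i) (q j))
              \<and> real (word_dist G S (q i) (q j)) \<le> Lq * real (j - i)"
        proof (intro allI impI)
          fix i j assume ij: "i \<le> j" "j \<le> nq"
          have C2: "q i \<in> carrier G" "q j \<in> carrier G" using qC by auto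
          have ab: "\<bar>real i - real j\<bar> = real (j - i)" using ij by simp
          have Q1: "real (j - i) / lam \<le> real (word_dist G T (q i) (q j))"
            and Q2: "real (word_dist G T (q i) (q j)) \<le> lam * real (j - i)"
            using qq ij ab unfolding quasigeodesic_def by (metis le_trans)+
          have "real (j - i) \<le> lam * real (word_dist G T (q i) (q j))" using Q1 lam
            by (simp add: divide_le_eq mult.commute)
          also have "\<dots> \<le> lam * (real a * real (word_dist G S (q i) (q j)))"
            using dTS[OF C2] lam by (intro mult_left_mono) auto
          also have "\<dots> = (lam * real a) * real (word_dist G S (q i) (q j))" by simp
          also have "\<dots> \<le> Lq * real (word_dist G S (q i) (q j))" using Lq1 by (intro mult_right_mono) auto
          finally have 1: "real (j - i) \<le> Lq * real (word_dist G S (q i) (q j))" .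
          have "real (word_dist G S (q i) (q j)) \<le> real b * real (word_dist G T (q i) (q j))" using dST[OF C2] .
          also have "\<dots> \<le> real b * (lam * real (j - i))" using Q2 by (intro mult_left_mono) auto
          also have "\<dots> = (lam * real b) * real (j - i)" by simp
          also have "\<dots> \<le> Lq * real (j - i)" using Lq1 by (intro mult_right_mono) auto
          finally show "real (j - i) \<le> Lq * real (word_dist G S (q i) (q j))
              \<and> real (word_dist G S (q i) (q j)) \<le> Lq * real (j - i)" using 1 by simp
        qed
        have near_p: "\<forall>t\<le>Nc. \<exists>j\<le>n. real (word_dist G S (c t) (p j)) \<le> max Bp 0"
          by (rule H.morse1[OF La1(1) pC pq]) (use c0 p0 cN pn cC cg Bp Nc_def in auto)
        have near_p2: "\<forall>i\<le>n. \<exists>t\<le>Nc. real (word_dist G S (p i) (c t)) \<le> D1"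
          unfolding D1_def
          by (rule H.morse2[OF La1(1) pC pq _ _ _ _ near_p]) (use c0 p0 cN pn cC cg Nc_def in auto)
        have qV: "\<forall>i\<le>nq. q i \<in> carrier G" using qC by simp
        have near_q: "\<forall>t\<le>Nc. \<exists>j\<le>nq. real (word_dist G S (c t) (q j)) \<le> B0q"
          unfolding B0q_def
          by (rule H.morse1[OF Lq1(1) qV qqS]) (use c0 q0 cN qn cC cg Bq Nc_def in auto)
        obtain t where t: "t \<le> Nc" "real (word_dist G S (p i) (c t)) \<le> D1" using near_p2 i by blast
        obtain j where j: "j \<le> nq" "real (word_dist G S (c t) (q j)) \<le> B0q" using near_q t by blast
        have piC: "p i \<in> carrier G" using pC i by simp
        have ctC: "c t \<in> carrier G" using cC t Nc_def by simp
        have "real (word_dist G S g (p i)) \<le> real b * real (word_dist G T g (p i))" using dST[OF g piC] .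
        also have "\<dots> \<le> real b * k" using pik by (intro mult_left_mono) auto
        finally have gpi: "real (word_dist G S g (p i)) \<le> real b * k" .
        have "word_dist G S (q j) g \<le> word_dist G S (q j) (c t) + word_dist G S (c t) g"
          using H.dtri qC ctC g by blast
        moreover have "word_dist G S (c t) g \<le> word_dist G S (c t) (p i) + word_dist G S (p i) g"
          using H.dtri piC ctC g by blast
        moreover have "word_dist G S (q j) (c t) = word_dist G S (c t) (q j)" using H.dsym qC ctC by blast
        moreover have "word_dist G S (c t) (p i) = word_dist G S (p i) (c t)" using H.dsym piC ctC by blast
        moreover have "word_dist G S (p i) g = word_dist G S g (p i)" using H.dsym piC g by blast
        ultimately have dqg: "real (word_dist G S (q j) g) \<le> R"
          unfolding R_def using gpi t j by linarith
        have "real (word_dist G T (q j) g) \<le> real a * real (word_dist G S (q j) g)" using dTS[OF qC g] .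
        also have "\<dots> \<le> real a * R" using dqg by (intro mult_left_mono) auto
        finally have dTqg: "real (word_dist G T (q j) g) \<le> real a * R" .
        have invC: "inv\<^bsub>G\<^esub> (q j) \<otimes>\<^bsub>G\<^esub> g \<in> carrier G" using qC g by simp
        obtain ws where ws: "set ws \<subseteq> T" "length ws = word_dist G T (q j) g"
            "word_prod G ws = inv\<^bsub>G\<^esub> (q j) \<otimes>\<^bsub>G\<^esub> g"
          using G.wl_ex[OF wgT invC] unfolding word_dist_def by blast
        have "set ws \<subseteq> (\<pi> \<circ> ev) ` A" using ws(1) unfolding T_def by (simp add: image_comp)
        then obtain u where u: "set u \<subseteq> A" "map (\<pi> \<circ> ev) u = ws" using lift_list by blast
        have "\<pi> (word_prod E (map ev u)) = word_prod G (map \<pi> (map ev u))"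
          using mapC[OF u(1)] by (rule pi.word_prod_hom)
        also have "\<dots> = inv\<^bsub>G\<^esub> (q j) \<otimes>\<^bsub>G\<^esub> g" using u(2) ws(3) by simp
        finally have uq: "\<pi> (word_prod E (map ev u)) = inv\<^bsub>G\<^esub> (\<pi> (word_prod E (map ev (take j w)))) \<otimes>\<^bsub>G\<^esub> g"
          unfolding q_def word_path_def .
        have lu: "real (length u) \<le> real a * R" using u(2) ws(2) dTqg by (metis length_map)
        obtain N where N: "inv\<^bsub>E\<^esub> (\<rho> (g \<otimes>\<^bsub>G\<^esub> h)) \<otimes>\<^bsub>E\<^esub> (\<rho> g \<otimes>\<^bsub>E\<^esub> \<rho> h) = \<iota> N"
            "- 2 * C * int (length u) \<le> N" "N \<le> 0"
          using core[OF ext gen(2) gen(3) rho g h w u(1) uq] by blast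
        define m where "m = nat (- N)"
        have Nm: "N = - int m" unfolding m_def using N(3) by simp
        have "word_dist E (ev ` A) (\<rho> (g \<otimes>\<^bsub>G\<^esub> h)) (\<rho> g \<otimes>\<^bsub>E\<^esub> \<rho> h) = word_length E (ev ` A) (\<iota> (- int m))"
          unfolding word_dist_def using N(1) Nm by simp
        also have "\<dots> \<le> m * wl1" unfolding wl1_def by (rule wl_iota[OF ext wgE])
        finally have "real (word_dist E (ev ` A) (\<rho> (g \<otimes>\<^bsub>G\<^esub> h)) (\<rho> g \<otimes>\<^bsub>E\<^esub> \<rho> h)) \<le> real m * real wl1"
          by (metis of_nat_le_iff of_nat_mult)
        also have "\<dots> \<le> (2 * real_of_int C * (real a * R)) * real wl1"
        proof (intro mult_right_mono)
          have "real_of_int (int m) \<le> real_of_int (2 * C * int (length u))" using N(2) Nm by linarith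
          then have "real m \<le> 2 * real_of_int C * real (length u)" by simp
          also have "\<dots> \<le> 2 * real_of_int C * (real a * R)" using lu C by (intro mult_left_mono) auto
          finally show "real m \<le> 2 * real_of_int C * (real a * R)" .
        qed simp
        finally show ?thesis unfolding K_def .
      qed
    qed
  qed
qed

end
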